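(* Every uniformly convex Banach space $X$ has the weak fixed point property for mappings which diminish the radius of invariant convex subsets: for every nontrivial weakly compact convex subset $K$ of $X$, every self-mapping $T:K\to K$ which diminishes the radius of invariant convex subsets of $K$ has a fixed point in $K$.
   Context: Nontrivial means containing more than one point. For $x\in X$ and $A\subseteq X$, $r_x(A)=\sup\{\|x-y\|:y\in A\}$. A mapping $T:K\to K$ diminishes the radius of invariant convex subsets of $K$ if for every convex $A\subseteq K$ with $T(A)\subseteq A$, $r_{Tx}(T(A))\le r_x(A)$ for every $x\in K$. *)

theory Defs
  imports "HOL-Analysis.Analysis"
begin

definition weak_topology :: "'a::real_normed_vector topology" where
  "weak_topology = topology_generated_by
     {{x. blinfun_apply f x \<in> U} | (f :: 'a \<Rightarrow>\<^sub>L real) U. open U}"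

definition weakly_compact :: "'a::real_normed_vector set \<Rightarrow> bool" where
  "weakly_compact K \<longleftrightarrow> compactin weak_topology K"

definition uniformly_convex :: "'a::real_normed_vector itself \<Rightarrow> bool" where
  "uniformly_convex _ \<longleftrightarrow>
     (\<forall>\<epsilon>>0. \<exists>\<delta>>0. \<forall>x y :: 'a. norm x \<le> 1 \<and> norm y \<le> 1 \<and> norm (x - y) \<ge> \<epsilon>
        \<longrightarrow> norm ((x + y) /\<^sub>R 2) \<le> 1 - \<delta>)"

definition radius_from :: "'a::real_normed_vector \<Rightarrow> 'a set \<Rightarrow> real" where
  "radius_from x A = (SUP y\<in>A. norm (x - y))"

definition diminishes_radius :: "('a::real_normed_vector \<Rightarrow> 'a) \<Rightarrow> 'a set \<Rightarrow> bool" where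
  "diminishes_radius T K \<longleftrightarrow>
     (\<forall>A. A \<subseteq> K \<and> convex A \<and> T ` A \<subseteq> A \<longrightarrow>
        (\<forall>x\<in>K. radius_from (T x) (T ` A) \<le> radius_from x A))"

end

theory Submission
  imports Defs
begin

definition sublin :: "('a::real_vector \<Rightarrow> real) \<Rightarrow> bool" where
  "sublin q \<longleftrightarrow> (\<forall>x y. q (x + y) \<le> q x + q y) \<and> (\<forall>t x. 0 < t \<longrightarrow> q (t *\<^sub>R x) = t * q x)"

lemma sublin_add: "sublin q \<Longrightarrow> q (x + y) \<le> q x + q y"
  by (simp add: sublin_def)

lemma sublin_0: assumes "sublin q" shows "q 0 = 0"
proof -
  have "\<forall>t x. 0 < t \<longrightarrow> q (t *\<^sub>R x) = t * q x" using assms by (simp add: sublin_def)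
  then have "q ((2::real) *\<^sub>R 0) = 2 * q 0" by (metis zero_less_numeral)
  then show ?thesis by simp
qed

lemma sublin_hom: assumes "sublin q" "0 \<le> t" shows "q (t *\<^sub>R x) = t * q x"
proof (cases "t = 0")
  case True then show ?thesis using sublin_0[OF assms(1)] by simp
next
  case False then show ?thesis using assms by (simp add: sublin_def)
qed

lemma sublin_neg: assumes "sublin q" shows "0 \<le> q x + q (- x)"
  using sublin_add[OF assms, of x "-x"] sublin_0[OF assms] by simp

definition shift :: "('a::real_vector \<Rightarrow> real) \<Rightarrow> 'a \<Rightarrow> 'a \<Rightarrow> real" where
  "shift q y x = Inf ((\<lambda>t. q (x + t *\<^sub>R y) - t * q y) ` {0..})"

lemma shift_lb: assumes "sublin q" "0 \<le> t" shows "- q (- x) \<le> q (x + t *\<^sub>R y) - t * q y"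
proof -
  have "q (t *\<^sub>R y) \<le> q (x + t *\<^sub>R y) + q (- x)"
    using sublin_add[OF assms(1), of "x + t *\<^sub>R y" "-x"] by simp
  then show ?thesis using sublin_hom[OF assms] by simp
qed

lemma shift_bdd: assumes "sublin q" shows "bdd_below ((\<lambda>t. q (x + t *\<^sub>R y) - t * q y) ` {0..})"
  unfolding bdd_below_def using shift_lb[OF assms] by fastforce

lemma shift_le: assumes "sublin q" "0 \<le> t" shows "shift q y x \<le> q (x + t *\<^sub>R y) - t * q y"
  unfolding shift_def using assms(2) by (intro cInf_lower shift_bdd[OF assms(1)]) auto

lemma shift_ge: assumes "\<And>t. 0 \<le> t \<Longrightarrow> c \<le> q (x + t *\<^sub>R y) - t * q y" shows "c \<le> shift q y x"
  unfolding shift_def using assms by (intro cInf_greatest) auto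

lemma shift_below: assumes "sublin q" shows "shift q y x \<le> q x"
  using shift_le[OF assms, of 0] by simp

lemma shift_negy: assumes "sublin q" shows "shift q y (- y) \<le> - q y"
  using shift_le[OF assms, of 1 y "-y"] sublin_0[OF assms] by simp

lemma shift_sublin: assumes q: "sublin q" shows "sublin (shift q y)"
  unfolding sublin_def
proof (intro conjI allI impI)
  fix a b
  have "shift q y (a + b) - (q (b + t2 *\<^sub>R y) - t2 * q y) \<le> q (a + t1 *\<^sub>R y) - t1 * q y"
    if "0 \<le> t1" "0 \<le> t2" for t1 t2
  proof -
    have "shift q y (a + b) \<le> q (a + b + (t1 + t2) *\<^sub>R y) - (t1 + t2) * q y"
      using shift_le[OF q] that by simp
    also have "q (a + b + (t1 + t2) *\<^sub>R y) \<le> q (a + t1 *\<^sub>R y) + q (b + t2 *\<^sub>R y)"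
      using sublin_add[OF q, of "a + t1 *\<^sub>R y" "b + t2 *\<^sub>R y"] by (simp add: algebra_simps)
    finally show ?thesis by (simp add: algebra_simps)
  qed
  then have "shift q y (a + b) - (q (b + t2 *\<^sub>R y) - t2 * q y) \<le> shift q y a" if "0 \<le> t2" for t2
    using that by (intro shift_ge) auto
  then have "shift q y (a + b) - shift q y a \<le> q (b + t2 *\<^sub>R y) - t2 * q y" if "0 \<le> t2" for t2
    using that by force
  then have "shift q y (a + b) - shift q y a \<le> shift q y b"
    by (intro shift_ge) auto
  then show "shift q y (a + b) \<le> shift q y a + shift q y b" by simp
next
  fix s :: real and x assume s: "0 < s"
  have "shift q y (s *\<^sub>R x) \<le> s * (q (x + t *\<^sub>R y) - t * q y)" if "0 \<le> t" for t
  proof -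
    have "shift q y (s *\<^sub>R x) \<le> q (s *\<^sub>R x + (s * t) *\<^sub>R y) - (s * t) * q y"
      using shift_le[OF q] that s by simp
    also have "s *\<^sub>R x + (s * t) *\<^sub>R y = s *\<^sub>R (x + t *\<^sub>R y)" by (simp add: algebra_simps)
    also have "q (s *\<^sub>R (x + t *\<^sub>R y)) = s * q (x + t *\<^sub>R y)" using sublin_hom[OF q, of s] s by simp
    finally show ?thesis by (simp add: algebra_simps)
  qed
  then have "shift q y (s *\<^sub>R x) / s \<le> q (x + t *\<^sub>R y) - t * q y" if "0 \<le> t" for t
    using that s by (simp add: divide_le_eq mult.commute)
  then have "shift q y (s *\<^sub>R x) / s \<le> shift q y x" by (intro shift_ge) auto
  then have 1: "shift q y (s *\<^sub>R x) \<le> s * shift q y x" using s by (simp add: divide_le_eq mult.commute)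
  have "s * shift q y x \<le> q (s *\<^sub>R x + t *\<^sub>R y) - t * q y" if "0 \<le> t" for t
  proof -
    have "shift q y x \<le> q (x + (t / s) *\<^sub>R y) - (t / s) * q y" using shift_le[OF q, of "t/s"] that s by simp
    then have "s * (shift q y x) \<le> s * (q (x + (t / s) *\<^sub>R y) - (t / s) * q y)" using s
      by (intro mult_left_mono) auto
    then have "s * shift q y x \<le> s * q (x + (t / s) *\<^sub>R y) - t * q y" using s
      by (simp add: algebra_simps)
    also have "s * q (x + (t / s) *\<^sub>R y) = q (s *\<^sub>R (x + (t / s) *\<^sub>R y))"
      using sublin_hom[OF q, of s] s by simp
    also have "s *\<^sub>R (x + (t / s) *\<^sub>R y) = s *\<^sub>R x + t *\<^sub>R y" using s by (simp add: algebra_simps)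
    finally show ?thesis .
  qed
  then have 2: "s * shift q y x \<le> shift q y (s *\<^sub>R x)" by (intro shift_ge) auto
  from 1 2 show "shift q y (s *\<^sub>R x) = s * shift q y x" by simp
qed

lemma sublin_norm: "sublin (norm :: 'a::real_normed_vector \<Rightarrow> real)"
  unfolding sublin_def by (auto simp: norm_triangle_ineq)

lemma chain_inf_sublin:
  fixes C :: "('a::real_normed_vector \<Rightarrow> real) set"
  assumes ne: "C \<noteq> {}" and sub: "\<And>q. q \<in> C \<Longrightarrow> sublin q \<and> (\<forall>x. q x \<le> norm x)"
    and ch: "\<And>a b. a \<in> C \<Longrightarrow> b \<in> C \<Longrightarrow> (\<forall>x. a x \<le> b x) \<or> (\<forall>x. b x \<le> a x)"
  defines "g \<equiv> \<lambda>x. Inf ((\<lambda>q. q x) ` C)"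
  shows "sublin g" and "\<And>q x. q \<in> C \<Longrightarrow> g x \<le> q x"
proof -
  have lb: "- norm x \<le> q x" if "q \<in> C" for q x
  proof -
    have "0 \<le> q x + q (- x)" using sublin_neg sub[OF that] by blast
    moreover have "q (- x) \<le> norm x" using sub[OF that] by (metis norm_minus_cancel)
    ultimately show ?thesis by linarith
  qed
  have bdd: "bdd_below ((\<lambda>q. q x) ` C)" for x
    unfolding bdd_below_def using lb by blast
  show le: "g x \<le> q x" if "q \<in> C" for q x
    unfolding g_def using that bdd by (intro cInf_lower) auto
  have ge: "c \<le> g x" if "\<And>q. q \<in> C \<Longrightarrow> c \<le> q x" for c x
    unfolding g_def using that ne by (intro cInf_greatest) auto
  show "sublin g"
    unfolding sublin_def
  proof (intro conjI allI impI)
    fix a b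
    have "g (a + b) \<le> q1 a + q2 b" if "q1 \<in> C" "q2 \<in> C" for q1 q2
    proof (cases "\<forall>x. q1 x \<le> q2 x")
      case True
      have "g (a + b) \<le> q1 (a + b)" using le that by blast
      also have "\<dots> \<le> q1 a + q1 b" using sub that sublin_add by blast
      finally show ?thesis using True[rule_format, of b] by linarith
    next
      case False
      then have T: "\<forall>x. q2 x \<le> q1 x" using ch that by blast
      have "g (a + b) \<le> q2 (a + b)" using le that by blast
      also have "\<dots> \<le> q2 a + q2 b" using sub that sublin_add by blast
      finally show ?thesis using T[rule_format, of a] by linarith
    qed
    then have "g (a + b) - q2 b \<le> g a" if "q2 \<in> C" for q2
      using that by (intro ge) force
    then have "g (a + b) - g a \<le> g b" by (intro ge) force
    then show "g (a + b) \<le> g a + g b" by simp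
  next
    fix t :: real and x assume t: "0 < t"
    have "g (t *\<^sub>R x) / t \<le> q x" if "q \<in> C" for q
      using le[OF that, of "t *\<^sub>R x"] sublin_hom[of q t x] sub[OF that] t
      by (simp add: divide_le_eq mult.commute)
    then have "g (t *\<^sub>R x) / t \<le> g x" by (intro ge) auto
    then have 1: "g (t *\<^sub>R x) \<le> t * g x" using t by (simp add: divide_le_eq mult.commute)
    have "t * g x \<le> q (t *\<^sub>R x)" if "q \<in> C" for q
      using le[OF that, of x] sublin_hom[of q t x] sub[OF that] t by simp
    then have 2: "t * g x \<le> g (t *\<^sub>R x)" by (intro ge) auto
    from 1 2 show "g (t *\<^sub>R x) = t * g x" by simp
  qed
qed

lemma hahn_banach_norming:
  fixes x0 :: "'a::real_normed_vector"
  shows "\<exists>g. linear g \<and> (\<forall>x. \<bar>g x\<bar> \<le> norm x) \<and> g x0 = norm x0"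
proof -
  define p0 where "p0 = shift norm x0"
  have p0: "sublin p0" unfolding p0_def by (rule shift_sublin[OF sublin_norm])
  have p0n: "p0 x \<le> norm x" for x unfolding p0_def by (rule shift_below[OF sublin_norm])
  have p0x: "p0 (- x0) \<le> - norm x0" unfolding p0_def by (rule shift_negy[OF sublin_norm])
  define S where "S = {q::'a\<Rightarrow>real. sublin q \<and> (\<forall>x. q x \<le> p0 x)}"
  define P where "P = (\<lambda>a b. \<forall>x::'a. b x \<le> (a x::real))"
  have po: "partial_order_on S (relation_of P S)"
    by (rule partial_order_on_relation_ofI) (auto simp: P_def intro!: ext intro: order_trans antisym)
  have "\<exists>m \<in> S. \<forall>a \<in> S. P m a \<longrightarrow> a = m"
  proof (rule predicate_Zorn[OF po])
    fix C assume C: "C \<in> Chains (relation_of P S)"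
    then have CS: "C \<subseteq> S" by (rule Chains_relation_of)
    show "\<exists>u\<in>S. \<forall>a\<in>C. P a u"
    proof (cases "C = {}")
      case True then show ?thesis using p0 by (auto simp: S_def)
    next
      case False
      have sub: "sublin q \<and> (\<forall>x. q x \<le> norm x)" if "q \<in> C" for q
        using CS that p0n by (auto simp: S_def intro: order_trans)
      have ch: "(\<forall>x. a x \<le> b x) \<or> (\<forall>x. b x \<le> a x)" if "a \<in> C" "b \<in> C" for a b
        using C that unfolding Chains_def relation_of_def P_def by blast
      define g where "g = (\<lambda>x. Inf ((\<lambda>q. q x) ` C))"
      have gs: "sublin g" and gle: "\<And>q x. q \<in> C \<Longrightarrow> g x \<le> q x"
        using chain_inf_sublin[OF False sub ch] unfolding g_def by blast+
      obtain q0 where "q0 \<in> C" using False by blast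
      then have "g \<in> S" using gs gle CS by (force simp: S_def intro: order_trans)
      then show ?thesis using gle by (auto simp: P_def)
    qed
  qed
  then obtain m where mS: "m \<in> S" and mmin: "\<And>a. a \<in> S \<Longrightarrow> P m a \<Longrightarrow> a = m" by blast
  have ms: "sublin m" and mp: "\<And>x. m x \<le> p0 x" using mS by (auto simp: S_def)
  have odd: "m (- y) = - m y" for y
  proof -
    have "shift m y \<in> S" using shift_sublin[OF ms] shift_below[OF ms] mp
      by (auto simp: S_def intro: order_trans[OF _ mp])
    moreover have "P m (shift m y)" using shift_below[OF ms] by (auto simp: P_def)
    ultimately have "shift m y = m" using mmin by blast
    then have "m (- y) \<le> - m y" using shift_negy[OF ms, of y] by simp
    moreover have "0 \<le> m y + m (- y)" using sublin_neg[OF ms] by blast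
    ultimately show ?thesis by linarith
  qed
  have add: "m (a + b) = m a + m b" for a b
  proof -
    have "m a \<le> m (a + b) + m (- b)" using sublin_add[OF ms, of "a + b" "-b"] by simp
    then show ?thesis using sublin_add[OF ms, of a b] odd[of b] by linarith
  qed
  have scal: "m (r *\<^sub>R b) = r *\<^sub>R m b" for r b
  proof (cases "0 \<le> r")
    case True then show ?thesis using sublin_hom[OF ms] by simp
  next
    case False
    then have "m (r *\<^sub>R b) = m (- ((- r) *\<^sub>R b))" by simp
    also have "\<dots> = - ((- r) * m b)" using odd sublin_hom[OF ms, of "-r"] False by simp
    finally show ?thesis by simp
  qed
  have lin: "linear m" by (rule linearI[OF add scal])
  have mn: "m x \<le> norm x" for x using mp p0n order_trans by blast
  have ab: "\<bar>m x\<bar> \<le> norm x" for x using mn[of x] mn[of "-x"] odd[of x] by simp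
  have "m x0 = norm x0" using mn[of x0] odd[of x0] mp[of "-x0"] p0x by linarith
  then show ?thesis using lin ab by blast
qed


lemma hb_blinfun:
  fixes x :: "'a::real_normed_vector"
  obtains g :: "'a \<Rightarrow>\<^sub>L real" where "\<And>y. \<bar>g y\<bar> \<le> norm y" "g x = norm x" "norm g \<le> 1"
proof -
  obtain m where lin: "linear m" and ab: "\<And>y. \<bar>m y\<bar> \<le> norm y" and mx: "m x = norm x"
    using hahn_banach_norming by blast
  have bl: "bounded_linear m"
    by (rule bounded_linear_intro[of m 1]) (use lin ab in \<open>auto simp: linear_add linear_scale\<close>)
  have "norm (Blinfun m) \<le> 1"
    by (rule norm_blinfun_bound) (use ab bl in \<open>auto simp: bounded_linear_Blinfun_apply\<close>)
  then show ?thesis using that[of "Blinfun m"] ab mx bl by (auto simp: bounded_linear_Blinfun_apply)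
qed

lemma weak_topspace [simp]: "topspace (weak_topology :: 'a::real_normed_vector topology) = UNIV"
proof -
  have "(UNIV::'a set) \<in> {{x. blinfun_apply f x \<in> U} | (f :: 'a \<Rightarrow>\<^sub>L real) U. open U}"
    by (rule CollectI, rule exI[of _ 0], rule exI[of _ UNIV]) auto
  then show ?thesis unfolding weak_topology_def by auto
qed

lemma weak_open: "open U \<Longrightarrow> openin weak_topology {x. blinfun_apply (f :: 'a::real_normed_vector \<Rightarrow>\<^sub>L real) x \<in> U}"
  unfolding weak_topology_def by (rule topology_generated_by_Basis) blast

lemma weak_cont: "continuous_map weak_topology euclidean (blinfun_apply (f :: 'a::real_normed_vector \<Rightarrow>\<^sub>L real))"
  unfolding continuous_map_def using weak_open by auto

lemma weak_closed_cball: "closedin weak_topology (cball (p::'a::real_normed_vector) r)"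
  unfolding closedin_def
proof (intro conjI)
  show "cball p r \<subseteq> topspace weak_topology" by simp
  show "openin weak_topology (topspace weak_topology - cball p r)"
  proof (subst openin_subopen, intro ballI)
    fix x assume "x \<in> topspace weak_topology - cball p r"
    then have xr: "r < norm (x - p)" by (simp add: dist_norm norm_minus_commute)
    obtain g :: "'a \<Rightarrow>\<^sub>L real" where g: "\<And>y. \<bar>g y\<bar> \<le> norm y" "g (x - p) = norm (x - p)"
      using hb_blinfun by blast
    define V where "V = {y. blinfun_apply g y \<in> {g p + r <..}}"
    have "openin weak_topology V" unfolding V_def by (rule weak_open) auto
    moreover have "x \<in> V" using g(2) xr by (simp add: V_def blinfun.diff_right)
    moreover have "V \<subseteq> topspace weak_topology - cball p r"
    proof
      fix y assume "y \<in> V"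
      then have "r < g (y - p)" by (simp add: V_def blinfun.diff_right)
      also have "\<dots> \<le> norm (y - p)" using g(1)[of "y - p"] by simp
      finally show "y \<in> topspace weak_topology - cball p r" by (simp add: dist_norm norm_minus_commute)
    qed
    ultimately show "\<exists>T. openin weak_topology T \<and> x \<in> T \<and> T \<subseteq> topspace weak_topology - cball p r"
      by blast
  qed
qed

lemma weakly_compact_bounded:
  fixes K :: "'a::real_normed_vector set"
  assumes wk: "weakly_compact K"
  shows "bounded K"
proof -
  have bf: "\<exists>n::nat. \<forall>x\<in>K. \<bar>blinfun_apply f x\<bar> \<le> real n" for f :: "'a \<Rightarrow>\<^sub>L real"
  proof -
    have "compactin euclidean (blinfun_apply f ` K)"
      using image_compactin[OF wk[unfolded weakly_compact_def] weak_cont] .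
    then have "bounded (blinfun_apply f ` K)" by (simp add: compact_imp_bounded)
    then obtain B where B: "\<And>x. x \<in> K \<Longrightarrow> \<bar>f x\<bar> \<le> B" by (auto simp: bounded_iff)
    show ?thesis
      by (rule exI[of _ "nat \<lceil>B\<rceil>"]) (use B real_nat_ceiling_ge order_trans in blast)
  qed
  define E where "E n = {f::'a \<Rightarrow>\<^sub>L real. \<forall>x\<in>K. \<bar>blinfun_apply f x\<bar> \<le> real n}" for n :: nat
  have closedE: "closed (E n)" for n
  proof -
    have "E n = (\<Inter>x\<in>K. {f::'a \<Rightarrow>\<^sub>L real. \<bar>blinfun_apply f x\<bar> \<le> real n})"
      by (auto simp: E_def)
    moreover have "closed {f::'a \<Rightarrow>\<^sub>L real. \<bar>blinfun_apply f x\<bar> \<le> real n}" for x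
      by (intro closed_Collect_le continuous_intros)
    ultimately show ?thesis by auto
  qed
  have UE: "\<Union>(range E) = UNIV" using bf by (auto simp: E_def)
  have "\<not> (\<forall>T\<in>range E. closedin euclidean T \<and> euclidean interior_of T = {})"
  proof
    assume "\<forall>T\<in>range E. closedin euclidean T \<and> euclidean interior_of T = {}"
    then have "euclidean interior_of \<Union>(range E) = {}"
      by (intro Baire_category_alt) (auto simp: completely_metrizable_space_euclidean)
    then show False using UE by simp
  qed
  then obtain n where "interior (E n) \<noteq> {}" using closedE by auto
  then obtain f0 e where e: "0 < e" and ball: "ball f0 e \<subseteq> E n"
    by (meson all_not_in_conv mem_interior)
  have "norm x \<le> 4 * real n / e" if x: "x \<in> K" for x
  proof -
    obtain g :: "'a \<Rightarrow>\<^sub>L real" where g: "g x = norm x" "norm g \<le> 1" using hb_blinfun by metis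
    have "dist f0 (f0 + (e/2) *\<^sub>R g) = (e/2) * norm g" using e by (simp add: dist_norm)
    also have "\<dots> \<le> (e/2) * 1" using g(2) e by (intro mult_left_mono) auto
    also have "\<dots> < e" using e by simp
    finally have "f0 + (e/2) *\<^sub>R g \<in> E n" using ball by auto
    then have 1: "\<bar>f0 x + (e/2) * norm x\<bar> \<le> real n" using x g by (auto simp: E_def blinfun.add_left blinfun.scaleR_left)
    have "f0 \<in> E n" using ball e by auto
    then have 2: "\<bar>f0 x\<bar> \<le> real n" using x by (auto simp: E_def)
    have "(e/2) * norm x \<le> 2 * real n" using 1 2 by linarith
    then show ?thesis using e by (simp add: field_simps)
  qed
  then show ?thesis by (auto simp: bounded_iff)
qed


lemma finite_chain_min:
  assumes "finite F" "F \<noteq> {}" "\<And>a b. a \<in> F \<Longrightarrow> b \<in> F \<Longrightarrow> a \<subseteq> b \<or> b \<subseteq> a"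
  shows "\<exists>m\<in>F. \<forall>b\<in>F. m \<subseteq> b"
  using assms
proof (induction F rule: finite_ne_induct)
  case (singleton x) then show ?case by auto
next
  case (insert x F)
  then obtain m where m: "m \<in> F" "\<forall>b\<in>F. m \<subseteq> b" by auto
  have "x \<subseteq> m \<or> m \<subseteq> x" using insert.prems[of x m] m(1) by blast
  then show ?case
  proof
    assume "x \<subseteq> m" then show ?thesis using m(2) by blast
  next
    assume "m \<subseteq> x" then show ?thesis using m by blast
  qed
qed

lemma le_of_eps:
  fixes a s :: real
  assumes "\<And>n::nat. a \<le> s + 1 / (real n + 1)"
  shows "a \<le> s"
proof (rule ccontr)
  assume "\<not> a \<le> s"
  then have "0 < a - s" by simp
  then obtain n :: nat where "1 / real (Suc n) < a - s"
    using nat_approx_posE[OF \<open>0 < a - s\<close>] by blast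
  moreover have "1 / (real n + 1) = 1 / real (Suc n)" by simp
  ultimately have "1 / (real n + 1) < a - s" by linarith
  then show False using assms[of n] by simp
qed

theorem corollary3p1:
  fixes K :: "'a::banach set" and T :: "'a \<Rightarrow> 'a"
  assumes "uniformly_convex TYPE('a)"
    and "weakly_compact K" and "convex K"
    and "\<exists>x\<in>K. \<exists>y\<in>K. x \<noteq> y"
    and "T ` K \<subseteq> K"
    and "diminishes_radius T K"
  shows "\<exists>x\<in>K. T x = x"
proof -
  note uc = assms(1)[unfolded uniformly_convex_def]
  define X where "X = subtopology (weak_topology :: 'a topology) K"
  have cpt: "compactin X K" unfolding X_def compactin_subtopology
    using assms(2) by (simp add: weakly_compact_def)
  have bK: "bounded K" using weakly_compact_bounded[OF assms(2)] .
  have Kne: "K \<noteq> {}" using assms(4) by blast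
  have "topspace X = K" by (simp add: X_def)
  then have clK: "closedin X K" using closedin_topspace by metis
  have clB: "closedin X (K \<inter> cball p r)" for p r
    unfolding X_def closedin_subtopology using weak_closed_cball by blast
  have bdd: "bdd_above ((\<lambda>y. norm (x - y)) ` A)" if "A \<subseteq> K" for x A
  proof -
    obtain B where B: "\<And>y. y \<in> K \<Longrightarrow> norm y \<le> B" using bK by (auto simp: bounded_iff)
    have "norm (x - y) \<le> norm x + B" if "y \<in> A" for y
      using norm_triangle_ineq4[of x y] B[of y] that \<open>A \<subseteq> K\<close> by auto
    then show ?thesis unfolding bdd_above_def by blast
  qed
  have rad_upper: "norm (x - y) \<le> radius_from x A" if "A \<subseteq> K" "y \<in> A" for x y A
    unfolding radius_from_def using bdd[OF that(1)] that(2) by (rule cSUP_upper2) auto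
  have rad_least: "radius_from x A \<le> c" if "A \<noteq> {}" "\<And>y. y \<in> A \<Longrightarrow> norm (x - y) \<le> c" for x A c
    unfolding radius_from_def using that by (intro cSUP_least) auto
  define F where "F = {A. A \<subseteq> K \<and> A \<noteq> {} \<and> convex A \<and> T ` A \<subseteq> A \<and> closedin X A}"
  define P where "P = (\<lambda>A B::'a set. B \<subseteq> A)"
  have po: "partial_order_on F (relation_of P F)"
    by (rule partial_order_on_relation_ofI) (auto simp: P_def)
  have "\<exists>M \<in> F. \<forall>A \<in> F. P M A \<longrightarrow> A = M"
  proof (rule predicate_Zorn[OF po])
    fix C assume C: "C \<in> Chains (relation_of P F)"
    then have CF: "C \<subseteq> F" by (rule Chains_relation_of)
    show "\<exists>u\<in>F. \<forall>a\<in>C. P a u"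
    proof (cases "C = {}")
      case True then show ?thesis using Kne assms(3,5) clK by (auto simp: F_def)
    next
      case False
      have ch: "a \<subseteq> b \<or> b \<subseteq> a" if "a \<in> C" "b \<in> C" for a b
        using C that unfolding Chains_def relation_of_def P_def by blast
      have clC: "\<forall>A\<in>C. closedin X A" using CF by (auto simp: F_def)
      have "K \<inter> \<Inter>C \<noteq> {}"
      proof -
        have "K \<inter> \<Inter>G \<noteq> {}" if G: "finite G" "G \<subseteq> C" for G
        proof (cases "G = {}")
          case True then show ?thesis using Kne by simp
        next
          case False
          then obtain m where m: "m \<in> G" "\<forall>b\<in>G. m \<subseteq> b"
            using finite_chain_min[OF G(1) False] ch G(2) by blast
          then have "\<Inter>G = m" by auto
          moreover have "m \<subseteq> K" "m \<noteq> {}" using m G CF by (auto simp: F_def)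
          ultimately show ?thesis by auto
        qed
        then show ?thesis using cpt[unfolded compactin_fip] clC by blast
      qed
      have CK: "\<Inter>C \<subseteq> K" using CF False by (auto simp: F_def)
      have Ccvx: "convex (\<Inter>C)" using CF by (intro convex_Inter) (auto simp: F_def)
      have CT: "T ` \<Inter>C \<subseteq> \<Inter>C"
      proof
        fix y assume "y \<in> T ` \<Inter>C"
        then obtain x where x: "x \<in> \<Inter>C" "y = T x" by blast
        have "T x \<in> A" if "A \<in> C" for A using x(1) that CF by (auto simp: F_def)
        then show "y \<in> \<Inter>C" using x(2) by blast
      qed
      have Ccl: "closedin X (\<Inter>C)" using clC False by (intro closedin_Inter) auto
      have "\<Inter>C \<noteq> {}" using \<open>K \<inter> \<Inter>C \<noteq> {}\<close> by blast
      then have "\<Inter>C \<in> F" using CK Ccvx CT Ccl by (simp add: F_def)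
      then show ?thesis by (auto simp: P_def)
    qed
  qed
  then obtain M where MF: "M \<in> F" and Mmin: "\<And>A. A \<in> F \<Longrightarrow> A \<subseteq> M \<Longrightarrow> A = M"
    by (auto simp: P_def)
  have MK: "M \<subseteq> K" and Mne: "M \<noteq> {}" and Mcvx: "convex M" and MT: "T ` M \<subseteq> M"
    and Mcl: "closedin X M" using MF by (auto simp: F_def)
  define s0 where "s0 = Inf ((\<lambda>x. radius_from x M) ` M)"
  have rad_nn: "0 \<le> radius_from x M" for x
  proof -
    obtain y where "y \<in> M" using Mne by blast
    then show ?thesis using rad_upper[OF MK, of y x] norm_ge_zero[of "x - y"] by linarith
  qed
  have s0_le: "s0 \<le> radius_from x M" if "x \<in> M" for x
    unfolding s0_def using that rad_nn by (intro cInf_lower) (auto simp: bdd_below_def)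
  define D where "D n = {x \<in> M. \<forall>z\<in>M. norm (x - z) \<le> s0 + 1 / (real n + 1)}" for n :: nat
  have Dcl: "closedin X (D n)" for n
  proof -
    have "D n = M \<inter> \<Inter>((\<lambda>z. K \<inter> cball z (s0 + 1 / (real n + 1))) ` M)"
      using MK by (auto simp: D_def dist_norm norm_minus_commute)
    moreover have "closedin X (\<Inter>((\<lambda>z. K \<inter> cball z (s0 + 1 / (real n + 1))) ` M))"
      using Mne clB by (intro closedin_Inter) auto
    ultimately show ?thesis using Mcl by (simp add: closedin_Int)
  qed
  have Dmono: "D n \<subseteq> D m" if "m \<le> n" for m n
  proof -
    have "1 / (real n + 1) \<le> 1 / (real m + 1)" using that by (simp add: frac_le)
    then show ?thesis by (auto simp: D_def intro: order_trans)
  qed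
  have Dne: "D n \<noteq> {}" for n
  proof -
    have "s0 < s0 + 1 / (real n + 1)" by simp
    then obtain x where x: "x \<in> M" "radius_from x M < s0 + 1 / (real n + 1)"
      unfolding s0_def using Mne by (subst (asm) cInf_less_iff) (auto simp: bdd_below_def intro: rad_nn)
    have "norm (x - z) \<le> s0 + 1 / (real n + 1)" if "z \<in> M" for z
      using rad_upper[OF MK that, of x] x(2) by linarith
    then have "x \<in> D n" using x(1) by (simp add: D_def)
    then show ?thesis by blast
  qed
  have "K \<inter> \<Inter>(range D) \<noteq> {}"
  proof -
    have "K \<inter> \<Inter>G \<noteq> {}" if G: "finite G" "G \<subseteq> range D" for G
    proof -
      obtain I where I: "finite I" "G = D ` I" using finite_subset_image[OF G] by blast
      define N where "N = (if I = {} then 0 else Max I)"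
      have "D N \<subseteq> D i" if i: "i \<in> I" for i
      proof -
        have "i \<le> N" using Max_ge[OF I(1) i] i by (auto simp: N_def)
        then show ?thesis by (rule Dmono)
      qed
      then have "D N \<subseteq> \<Inter>G" using I(2) by blast
      moreover have "D N \<subseteq> K" using MK by (auto simp: D_def)
      ultimately show ?thesis using Dne[of N] by blast
    qed
    then show ?thesis using cpt[unfolded compactin_fip] Dcl by blast
  qed
  then obtain c where cD: "\<And>n. c \<in> D n" by blast
  have cM: "c \<in> M" using cD[of 0] unfolding D_def by blast
  have cmin: "radius_from c M \<le> radius_from x M" if "x \<in> M" for x
  proof -
    have "norm (c - y) \<le> s0" if y: "y \<in> M" for y
    proof (rule le_of_eps)
      fix n :: nat
      show "norm (c - y) \<le> s0 + 1 / (real n + 1)" using cD[of n] y unfolding D_def by blast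
    qed
    then have "radius_from c M \<le> s0" using rad_least[OF Mne] by blast
    then show ?thesis using s0_le[OF that] by linarith
  qed
  have TcM: "T c \<in> M" using MT cM by blast
  define \<rho> where "\<rho> = radius_from (T c) (T ` M)"
  have TMK: "T ` M \<subseteq> K" using MT MK by blast
  define B where "B = M \<inter> cball (T c) \<rho>"
  have TMB: "T ` M \<subseteq> B"
    using MT rad_upper[OF TMK] by (auto simp: B_def dist_norm \<rho>_def)
  have "B \<in> F"
  proof -
    have "B \<subseteq> K" "convex B" using MK Mcvx by (auto simp: B_def intro!: convex_Int)
    moreover have "B \<noteq> {}" using TMB Mne by blast
    moreover have "T ` B \<subseteq> B" using TMB by (auto simp: B_def)
    moreover have "closedin X B"
    proof -
      have "B = M \<inter> (K \<inter> cball (T c) \<rho>)" using MK by (auto simp: B_def)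
      then show ?thesis using Mcl clB by (simp add: closedin_Int)
    qed
    ultimately show ?thesis by (simp add: F_def)
  qed
  then have "B = M" using Mmin by (auto simp: B_def)
  then have "radius_from (T c) M \<le> \<rho>"
    using Mne by (intro rad_least) (auto simp: B_def dist_norm)
  also have "\<rho> \<le> radius_from c M"
    unfolding \<rho>_def using assms(6) MK Mcvx MT cM by (auto simp: diminishes_radius_def)
  finally have Tcr: "radius_from (T c) M \<le> radius_from c M" .
  show ?thesis
  proof (rule ccontr)
    assume "\<not> ?thesis"
    then have ne: "T c \<noteq> c" using cM MK by blast
    define r where "r = radius_from c M"
    define d where "d = norm (c - T c)"
    have dpos: "0 < d" using ne by (simp add: d_def)
    have "d \<le> r" unfolding d_def r_def using rad_upper[OF MK TcM] .
    then have rpos: "0 < r" using dpos by linarith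
    obtain \<delta> where \<delta>: "0 < \<delta>" and ucd: "\<And>x y::'a. norm x \<le> 1 \<Longrightarrow> norm y \<le> 1 \<Longrightarrow> d / r \<le> norm (x - y)
        \<Longrightarrow> norm ((x + y) /\<^sub>R 2) \<le> 1 - \<delta>"
    proof -
      have "0 < d / r" using dpos rpos by simp
      then obtain \<delta> where "0 < \<delta>" and "\<forall>x y :: 'a. norm x \<le> 1 \<and> norm y \<le> 1 \<and> norm (x - y) \<ge> d / r
        \<longrightarrow> norm ((x + y) /\<^sub>R 2) \<le> 1 - \<delta>" using uc by blast
      then show ?thesis using that by blast
    qed
    define m where "m = (1/2) *\<^sub>R c + (1/2) *\<^sub>R T c"
    have mM: "m \<in> M" unfolding m_def using Mcvx cM TcM by (intro convexD) auto
    have "norm (m - z) \<le> r * (1 - \<delta>)" if z: "z \<in> M" for z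
    proof -
      define u where "u = (1/r) *\<^sub>R (z - c)"
      define v where "v = (1/r) *\<^sub>R (z - T c)"
      have "norm (c - z) \<le> r" unfolding r_def using rad_upper[OF MK z] .
      then have nu: "norm u \<le> 1" using rpos by (simp add: u_def norm_minus_commute divide_le_eq)
      have "norm (T c - z) \<le> r" unfolding r_def using rad_upper[OF MK z, of "T c"] Tcr by linarith
      then have nv: "norm v \<le> 1" using rpos by (simp add: v_def norm_minus_commute divide_le_eq)
      have "u - v = (1/r) *\<^sub>R (T c - c)" by (simp add: u_def v_def algebra_simps)
      then have "norm (u - v) = d / r" using rpos by (simp add: d_def norm_minus_commute)
      then have uv: "norm ((u + v) /\<^sub>R 2) \<le> 1 - \<delta>" using ucd nu nv by simp
      have zz: "(1 / (r * 2)) *\<^sub>R z + (1 / (r * 2)) *\<^sub>R z = (1 / r) *\<^sub>R z"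
        by (simp add: scaleR_add_left[symmetric])
      have eq: "(u + v) /\<^sub>R 2 = (1/r) *\<^sub>R (z - m)"
        using zz by (simp add: u_def v_def m_def algebra_simps)
      have "norm (z - m) / r \<le> 1 - \<delta>" using uv rpos unfolding eq by simp
      then show ?thesis using rpos by (simp add: norm_minus_commute divide_le_eq mult.commute)
    qed
    then have "radius_from m M \<le> r * (1 - \<delta>)" using Mne by (intro rad_least) auto
    also have "\<dots> < r" using rpos \<delta> by simp
    finally show False using cmin[OF mM] r_def by simp
  qed
qed

end
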